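(* Let $n,p\ge1$ be integers and $0<\sigma\le B$. If $A\le B$, then \[ A+\frac{(\ln 2)^2}{4\sqrt2}\,\frac Bn\big(f(A)-f(B)\big)\;\le\;\int_0^Bp^{\mathrm{Benn}}(t)\,dt\;\le\;A+\frac Bn\big(f(A)-f(B)\big). \] If $A>B$, then $\int_0^Bp^{\mathrm{Benn}}(t)\,dt=B$. In general, \[ (A\wedge B)+\frac{(\ln 2)^2}{4\sqrt2}\,\frac Bn\big(f(A\wedge B)-f(B)\big)\;\le\;\int_0^Bp^{\mathrm{Benn}}(t)\,dt\;\le\;(A\wedge B)+\frac Bn\big(f(A\wedge B)-f(B)\big). \]
   Context: Let $\Psi(x)=(1+x)\ln(1+x)-x$ for $x\ge0$ (a bijection of $[0,\infty)$ onto itself) and $\Psi^{-1}$ its inverse. Define $q^{\mathrm{Benn}}(t)=2p\exp\!\big(-\frac{n\sigma^2}{B^2}\Psi(\frac{tB}{\sigma^2})\big)$ and $p^{\mathrm{Benn}}(t)=\min\{1,q^{\mathrm{Benn}}(t)\}$ for $t\ge0$, and \[ A=\frac{\sigma^2}{B}\Psi^{-1}\Big(\frac{B^2\ln(2p)}{n\sigma^2}\Big),\qquad f(t)=\frac{q^{\mathrm{Benn}}(t)}{\ln(1+tB/\sigma^2)},\ t>0. \] *)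

theory Defs
  imports "HOL-Analysis.Analysis"
begin

definition Psi :: "real \<Rightarrow> real" where
  "Psi x = (1 + x) * ln (1 + x) - x"

definition Psi_inv :: "real \<Rightarrow> real" where
  "Psi_inv = the_inv_into {0..} Psi"

definition q_Benn :: "nat \<Rightarrow> nat \<Rightarrow> real \<Rightarrow> real \<Rightarrow> real \<Rightarrow> real" where
  "q_Benn n p \<sigma> B t = 2 * real p * exp (- (real n * \<sigma>\<^sup>2 / B\<^sup>2) * Psi (t * B / \<sigma>\<^sup>2))"

definition p_Benn :: "nat \<Rightarrow> nat \<Rightarrow> real \<Rightarrow> real \<Rightarrow> real \<Rightarrow> real" where
  "p_Benn n p \<sigma> B t = min 1 (q_Benn n p \<sigma> B t)"

definition A_Benn :: "nat \<Rightarrow> nat \<Rightarrow> real \<Rightarrow> real \<Rightarrow> real" where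
  "A_Benn n p \<sigma> B = \<sigma>\<^sup>2 / B * Psi_inv (B\<^sup>2 * ln (2 * real p) / (real n * \<sigma>\<^sup>2))"

definition f_Benn :: "nat \<Rightarrow> nat \<Rightarrow> real \<Rightarrow> real \<Rightarrow> real \<Rightarrow> real" where
  "f_Benn n p \<sigma> B t = q_Benn n p \<sigma> B t / ln (1 + t * B / \<sigma>\<^sup>2)"

end

theory Submission
  imports Defs
begin

lemma Psi_deriv: "x > -1 \<Longrightarrow> (Psi has_real_derivative ln (1 + x)) (at x)"
  unfolding Psi_def[abs_def]
  by (auto intro!: derivative_eq_intros simp: field_simps)

lemma Psi_strict: assumes "0 \<le> x" "x < y" shows "Psi x < Psi y"
proof -
  obtain z where z: "x < z" "z < y" "Psi y - Psi x = (y - x) * ln (1 + z)"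
    using MVT2[of x y Psi "\<lambda>u. ln (1 + u)"] assms Psi_deriv by force
  have "ln (1 + z) > 0" using z assms by simp
  moreover have "y - x > 0" using assms by simp
  ultimately have "(y - x) * ln (1 + z) > 0" by simp
  then show ?thesis using z(3) by linarith
qed

lemma Psi_mono: "0 \<le> x \<Longrightarrow> x \<le> y \<Longrightarrow> Psi x \<le> Psi y"
  by (cases "x = y") (auto intro!: less_imp_le Psi_strict)

lemma Psi_0: "Psi 0 = 0" by (simp add: Psi_def)

lemma Psi_inj: "inj_on Psi {0..}"
  by (rule inj_onI) (metis atLeast_iff linorder_neqE_linordered_idom Psi_strict less_irrefl)

lemma Psi_cont: "continuous_on {0..} Psi"
  unfolding Psi_def[abs_def] by (intro continuous_intros) auto

lemma Psi_surj: assumes "y \<ge> 0" shows "y \<in> Psi ` {0..}"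
proof -
  define b where "b = max y (exp 2)"
  have "exp 2 \<le> 1 + b" unfolding b_def by auto
  then have "ln (exp 2) \<le> ln (1 + b)" by (subst ln_le_cancel_iff) (auto intro: less_le_trans[OF exp_gt_zero])
  then have l: "2 \<le> ln (1 + b)" by simp
  have "b \<ge> 0" unfolding b_def using assms by auto
  then have "(1 + b) * 2 \<le> (1 + b) * ln (1 + b)" using l by (intro mult_left_mono) auto
  then have "Psi b \<ge> y" unfolding Psi_def b_def by auto
  moreover have "continuous_on {0..b} Psi" using Psi_cont by (rule continuous_on_subset) auto
  ultimately obtain x where "x \<ge> 0" "x \<le> b" "Psi x = y"
    using IVT'[of Psi 0 y b] assms Psi_0 \<open>b \<ge> 0\<close> by auto
  then show ?thesis by force
qed

lemma Psi_inv: assumes "y \<ge> 0" shows "Psi_inv y \<ge> 0" "Psi (Psi_inv y) = y"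
  using the_inv_into_into[OF Psi_inj Psi_surj[OF assms], of "{0..}"]
    f_the_inv_into_f[OF Psi_inj Psi_surj[OF assms]] unfolding Psi_inv_def by auto

lemma Psi_le: assumes "s \<ge> 0" shows "Psi s \<le> (1 + s) * (ln (1 + s))^2"
proof -
  define x where "x = ln (1 + s)"
  have x0: "x \<ge> 0" using assms x_def by simp
  have "x \<le> s" unfolding x_def using assms ln_add_one_self_le_self by blast
  have pos: "x^2 - x + 1 > 0" by (smt (verit) power2_eq_square mult_nonneg_nonneg x0 mult_le_cancel_right1)
  have "(1 + x) * (x^2 - x + 1) \<le> (1 + s) * (x^2 - x + 1)"
    using \<open>x \<le> s\<close> pos by (intro mult_right_mono) auto
  moreover have "(1 + x) * (x^2 - x + 1) = 1 + x^3" by (simp add: algebra_simps power2_eq_square power3_eq_cube)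
  moreover have "x^3 \<ge> 0" using x0 by simp
  ultimately have "1 \<le> (1 + s) * (x^2 - x + 1)" by linarith
  then show ?thesis unfolding Psi_def x_def[symmetric] by (simp add: algebra_simps)
qed

lemma Psi_chain [derivative_intros]:
  "(g has_real_derivative g') (at x within S) \<Longrightarrow> g x > -1 \<Longrightarrow>
   ((\<lambda>x. Psi (g x)) has_real_derivative ln (1 + g x) * g') (at x within S)"
  using DERIV_chain2[OF Psi_deriv] by blast

lemma q_deriv:
  fixes n p :: nat and \<sigma> B t :: real
  assumes "0 < \<sigma>" "0 < B" "0 < t"
  shows "(q_Benn n p \<sigma> B has_real_derivative
     q_Benn n p \<sigma> B t * (- (real n / B) * ln (1 + t * B / \<sigma>^2))) (at t)"
proof -
  have u: "t * B / \<sigma>^2 > -1" using assms by (simp add: less_trans[of _ 0])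
  have "((\<lambda>t. 2 * real p * exp (- (real n * \<sigma>\<^sup>2 / B\<^sup>2) * Psi (t * B / \<sigma>\<^sup>2))) has_real_derivative
     2 * real p * (exp (- (real n * \<sigma>\<^sup>2 / B\<^sup>2) * Psi (t * B / \<sigma>\<^sup>2)) *
       (- (real n * \<sigma>\<^sup>2 / B\<^sup>2) * (ln (1 + t * B / \<sigma>^2) * (1 * B / \<sigma>^2))))) (at t)"
    by (intro DERIV_cmult DERIV_fun_exp DERIV_cmult Psi_chain DERIV_cdivide DERIV_cmult_right DERIV_ident u)
  then show ?thesis unfolding q_Benn_def[abs_def] using assms
    by (simp add: field_simps power2_eq_square)
qed

lemma L_deriv:
  fixes \<sigma> B t :: real
  assumes "0 < \<sigma>" "0 < B" "0 \<le> t"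
  shows "((\<lambda>t. ln (1 + t * B / \<sigma>^2)) has_real_derivative (B / \<sigma>^2) / (1 + t * B / \<sigma>^2)) (at t)"
proof -
  have u: "1 + t * B / \<sigma>^2 > 0" using assms by (simp add: add_pos_nonneg)
  have "((\<lambda>t. ln (1 + t * B / \<sigma>^2)) has_real_derivative (1 / (1 + t * B / \<sigma>^2)) * (0 + 1 * B / \<sigma>^2)) (at t)"
  proof -
    have d1: "((\<lambda>t. 1 + t * B / \<sigma>^2) has_real_derivative (0 + 1 * B / \<sigma>^2)) (at t)"
      by (intro DERIV_add DERIV_const DERIV_cdivide DERIV_cmult_right DERIV_ident)
    show ?thesis using DERIV_chain2[OF DERIV_ln_divide[OF u] d1] .
  qed
  moreover have eq: "1 / (1 + t * B / \<sigma>^2) * (0 + 1 * B / \<sigma>^2) = (B / \<sigma>^2) / (1 + t * B / \<sigma>^2)" by simp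
  ultimately show ?thesis by (simp only: eq)
qed

lemma G_deriv:
  fixes n p :: nat and \<sigma> B t :: real
  assumes "n \<ge> 1" "0 < \<sigma>" "0 < B" "0 < t"
  shows "((\<lambda>t. - (B / real n) * f_Benn n p \<sigma> B t) has_real_derivative
     q_Benn n p \<sigma> B t * (1 + B^2 / (real n * \<sigma>^2 * (1 + t * B / \<sigma>^2) * (ln (1 + t * B / \<sigma>^2))^2))) (at t)"
proof -
  define L where "L = ln (1 + t * B / \<sigma>^2)"
  define u where "u = t * B / \<sigma>^2"
  define q where "q = q_Benn n p \<sigma> B t"
  have u: "u > 0" using assms u_def by simp
  then have L: "L > 0" unfolding L_def u_def by simp
  have d: "((\<lambda>t. - (B / real n) * f_Benn n p \<sigma> B t) has_real_derivative
     - (B / real n) * ((q * (- (real n / B) * L) * L - q * ((B / \<sigma>^2) / (1 + u))) / (L * L))) (at t)"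
    unfolding f_Benn_def L_def q_def u_def
    by (intro DERIV_cmult DERIV_divide q_deriv L_deriv assms less_imp_le) (use L L_def u_def in auto)
  have n: "real n > 0" using assms by simp
  have e: "- (B / real n) * ((q * (- (real n / B) * L) * L - q * ((B / \<sigma>^2) / (1 + u))) / (L * L))
     = q * (1 + B^2 / (real n * \<sigma>^2 * (1 + u) * L^2))"
  proof -
    have "- (B / real n) * ((q * (- (real n / B) * L) * L - q * ((B / \<sigma>^2) / (1 + u))) / (L * L))
       = q * (L * L) / (L * L) + (B / real n) * (q * ((B / \<sigma>^2) / (1 + u))) / (L * L)"
      using n assms by (simp add: diff_divide_distrib algebra_simps)
    also have "\<dots> = q + q * ((B / real n) * ((B / \<sigma>^2) / (1 + u)) / (L * L))"
      using L by simp
    moreover have "(B / real n) * ((B / \<sigma>^2) / (1 + u)) / (L * L) = B^2 / (real n * \<sigma>^2 * (1 + u) * L^2)"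
      by (simp add: power2_eq_square)
    ultimately show ?thesis by (metis distrib_left mult_1_right)
  qed
  have d2: "((\<lambda>t. - (B / real n) * f_Benn n p \<sigma> B t) has_real_derivative
     q * (1 + B^2 / (real n * \<sigma>^2 * (1 + u) * L^2))) (at t)" using d unfolding e .
  then show ?thesis unfolding L_def u_def q_def .
qed

lemma q_cont:
  fixes n p :: nat and \<sigma> B :: real
  assumes "0 < \<sigma>" "0 < B" "0 \<le> a"
  shows "continuous_on {a..b} (q_Benn n p \<sigma> B)"
proof -
  have lin: "continuous_on {a..b} (\<lambda>t. t * B / \<sigma>\<^sup>2)"
    by (intro continuous_on_divide continuous_on_mult continuous_on_id continuous_on_const) (use assms in simp)
  have im: "(\<lambda>t. t * B / \<sigma>\<^sup>2) ` {a..b} \<subseteq> {0..}" using assms by auto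
  have ps: "continuous_on {a..b} (\<lambda>t. Psi (t * B / \<sigma>\<^sup>2))"
    by (rule continuous_on_compose2[OF Psi_cont lin im])
  have "continuous_on {a..b} (\<lambda>t. 2 * real p * exp (- (real n * \<sigma>\<^sup>2 / B\<^sup>2) * Psi (t * B / \<sigma>\<^sup>2)))"
    by (intro continuous_on_mult continuous_on_const continuous_on_exp ps)
  then show ?thesis unfolding q_Benn_def[abs_def] .
qed

theorem theorem3p1:
  fixes n p :: nat and \<sigma> B :: real
  assumes "n \<ge> 1" and "p \<ge> 1" and "0 < \<sigma>" and "\<sigma> \<le> B"
  defines "A \<equiv> A_Benn n p \<sigma> B"
      and "f \<equiv> f_Benn n p \<sigma> B"
      and "I \<equiv> integral {0..B} (p_Benn n p \<sigma> B)"
      and "c \<equiv> (ln 2)\<^sup>2 / (4 * sqrt 2)"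
  shows "(A \<le> B \<longrightarrow>
            A + c * (B / real n) * (f A - f B) \<le> I \<and>
            I \<le> A + (B / real n) * (f A - f B))
       \<and> (A > B \<longrightarrow> I = B)
       \<and> (min A B + c * (B / real n) * (f (min A B) - f B) \<le> I \<and>
          I \<le> min A B + (B / real n) * (f (min A B) - f B))"
proof -
  define q where "q = q_Benn n p \<sigma> B"
  define a where "a = real n * \<sigma>\<^sup>2 / B\<^sup>2"
  define K where "K = B\<^sup>2 * ln (2 * real p) / (real n * \<sigma>\<^sup>2)"
  define s0 where "s0 = Psi_inv K"
  have B: "B > 0" using assms by linarith
  have n: "real n > 0" using assms by simp
  have p2: "2 * real p \<ge> 2" using assms by simp
  have ln2: "ln (2::real) > 0" "ln (2::real) < 1" by (simp_all add: ln_2_less_1)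
  have lnp: "ln (2 * real p) \<ge> ln 2" using p2 by simp
  have K: "K > 0" unfolding K_def using B n assms lnp ln2 by (intro divide_pos_pos mult_pos_pos) auto
  have s0: "s0 \<ge> 0" "Psi s0 = K" using Psi_inv[of K] K unfolding s0_def by auto
  have s0pos: "s0 > 0" using s0 K Psi_0 by (cases "s0 = 0") auto
  have A_eq: "A = \<sigma>\<^sup>2 / B * s0" unfolding A_def A_Benn_def s0_def K_def ..
  have As0: "t * B / \<sigma>\<^sup>2 \<le> s0 \<longleftrightarrow> t \<le> A" for t
    unfolding A_eq using B assms by (simp add: field_simps)
  have Apos: "A > 0" unfolding A_eq using s0pos B assms by simp
  have aK: "a * K = ln (2 * real p)" unfolding a_def K_def using B n assms by (simp add: field_simps)
  have apos: "a > 0" unfolding a_def using B n assms by simp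
  have q_eq: "q t = 2 * real p * exp (- (a * Psi (t * B / \<sigma>\<^sup>2)))" for t
    unfolding q_def q_Benn_def a_def by simp
  have q_ge1: "q t \<ge> 1" if "0 \<le> t" "t \<le> A" for t
  proof -
    have "Psi (t * B / \<sigma>\<^sup>2) \<le> K" using Psi_mono[of "t * B / \<sigma>\<^sup>2" s0] that As0 s0 B assms by auto
    then have "a * Psi (t * B / \<sigma>\<^sup>2) \<le> ln (2 * real p)" using aK apos by (metis mult_left_mono less_imp_le)
    then have "exp (- (a * Psi (t * B / \<sigma>\<^sup>2))) \<ge> exp (- ln (2 * real p))" by simp
    moreover have "exp (- ln (2 * real p)) = 1 / (2 * real p)" using p2 by (simp add: exp_minus inverse_eq_divide)
    ultimately have "2 * real p * exp (- (a * Psi (t * B / \<sigma>\<^sup>2))) \<ge> 2 * real p * (1 / (2 * real p))"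
      using p2 by (intro mult_left_mono) auto
    then show ?thesis unfolding q_eq using p2 by simp
  qed
  have q_le1: "q t \<le> 1" "a * Psi (t * B / \<sigma>\<^sup>2) \<ge> ln (2 * real p)" if "A \<le> t" for t
  proof -
    have t0: "t \<ge> 0" using that Apos by simp
    have "t * B / \<sigma>\<^sup>2 \<ge> s0"
    proof -
      have "A * B / \<sigma>\<^sup>2 = s0" unfolding A_eq using B assms by (simp add: field_simps)
      moreover have "A * B / \<sigma>\<^sup>2 \<le> t * B / \<sigma>\<^sup>2" using that B by (simp add: divide_right_mono)
      ultimately show ?thesis by simp
    qed
    then have "Psi (t * B / \<sigma>\<^sup>2) \<ge> K" using Psi_mono[of s0 "t * B / \<sigma>\<^sup>2"] s0 by auto
    then show ge: "a * Psi (t * B / \<sigma>\<^sup>2) \<ge> ln (2 * real p)" using aK apos by (metis mult_left_mono less_imp_le)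
    then have "exp (- (a * Psi (t * B / \<sigma>\<^sup>2))) \<le> exp (- ln (2 * real p))" by simp
    moreover have "exp (- ln (2 * real p)) = 1 / (2 * real p)" using p2 by (simp add: exp_minus inverse_eq_divide)
    ultimately have "2 * real p * exp (- (a * Psi (t * B / \<sigma>\<^sup>2))) \<le> 2 * real p * (1 / (2 * real p))"
      using p2 by (intro mult_left_mono) auto
    then show "q t \<le> 1" unfolding q_eq using p2 by simp
  qed
  have pB: "p_Benn n p \<sigma> B t = (if t \<le> A then 1 else q t)" if "0 \<le> t" for t
    using q_ge1[OF that] q_le1[of t] unfolding p_Benn_def q_def[symmetric] by auto
  have pcont: "continuous_on {0..B} (p_Benn n p \<sigma> B)"
    unfolding p_Benn_def[abs_def] using q_cont[of \<sigma> B 0 B n p] B assms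
    by (intro continuous_intros) auto
  show ?thesis
  proof (cases "A \<le> B")
    case False
    have "I = integral {0..B} (\<lambda>t. 1::real)" unfolding I_def
    proof (rule integral_cong)
      fix t assume "t \<in> {0..B}"
      then show "p_Benn n p \<sigma> B t = 1" using pB[of t] False by simp
    qed
    also have "\<dots> = B" using B by simp
    finally have IB: "I = B" .
    have mn: "min A B = B" using False by simp
    show ?thesis unfolding mn using False IB by simp
  next
    case True
    have comb: "integral {0..A} (p_Benn n p \<sigma> B) + integral {A..B} (p_Benn n p \<sigma> B) = I"
      unfolding I_def using Henstock_Kurzweil_Integration.integral_combine[OF _ True integrable_continuous_interval[OF pcont]] Apos by simp
    have I1: "integral {0..A} (p_Benn n p \<sigma> B) = A"
    proof -
      have "integral {0..A} (p_Benn n p \<sigma> B) = integral {0..A} (\<lambda>t. 1::real)"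
      proof (rule integral_cong)
        fix t assume "t \<in> {0..A}"
        then show "p_Benn n p \<sigma> B t = 1" using pB[of t] by simp
      qed
      then show ?thesis using Apos by simp
    qed
    have I2: "integral {A..B} (p_Benn n p \<sigma> B) = integral {A..B} q"
    proof (rule integral_cong)
      fix t assume t: "t \<in> {A..B}"
      show "p_Benn n p \<sigma> B t = q t"
      proof (cases "t \<le> A")
        case True
        then have "t = A" using t by auto
        then show ?thesis using q_le1(1)[of A] q_ge1[of A] pB[of A] Apos by auto
      next
        case False
        then show ?thesis using pB[of t] Apos by auto
      qed
    qed
    define D where "D t = B^2 / (real n * \<sigma>^2 * (1 + t * B / \<sigma>^2) * (ln (1 + t * B / \<sigma>^2))^2)" for t
    define G where "G t = - (B / real n) * f t" for t
    have Gd: "(G has_real_derivative q t * (1 + D t)) (at t)" if "t > 0" for t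
      unfolding G_def f_def q_def D_def using G_deriv[of n \<sigma> B t p] assms B that by simp
    have FTC: "((\<lambda>t. q t * (1 + D t)) has_integral (G B - G A)) {A..B}"
      using True
    proof (intro fundamental_theorem_of_calculus)
      fix x assume "x \<in> {A..B}"
      then have "x > 0" using Apos by auto
      then show "(G has_vector_derivative q x * (1 + D x)) (at x within {A..B})"
        using Gd has_real_derivative_iff_has_vector_derivative has_field_derivative_at_within by blast
    qed
    have GBA: "G B - G A = (B / real n) * (f A - f B)" unfolding G_def by (simp add: algebra_simps)
    have qint: "(q has_integral integral {A..B} q) {A..B}"
      using q_cont[of \<sigma> B A B n p] Apos B assms unfolding q_def
      by (intro integrable_integral integrable_continuous_interval) auto
    have Dbounds: "0 \<le> D t \<and> D t \<le> 1 / ln 2" if "t \<in> {A..B}" for t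
    proof -
      define u where "u = t * B / \<sigma>^2"
      have u0: "u \<ge> 0" using that Apos B u_def by auto
      have "Psi u \<le> (1 + u) * (ln (1 + u))^2" using Psi_le[OF u0] .
      moreover have "a * Psi u \<ge> ln (2 * real p)" using q_le1(2)[of t] that u_def by auto
      ultimately have "a * ((1 + u) * (ln (1 + u))^2) \<ge> ln 2"
        using lnp apos by (meson mult_left_mono less_imp_le order_trans)
      moreover have "D t = 1 / (a * ((1 + u) * (ln (1 + u))^2))"
        unfolding D_def a_def u_def using B assms n by (simp add: field_simps)
      ultimately obtain X where X: "D t = 1 / X" "ln 2 \<le> X" by blast
      have l2: "0 < ln (2::real)" by simp
      have X0: "X > 0" using X l2 by linarith
      have "1 / X \<le> 1 / ln 2" using X l2 X0 by (intro divide_left_mono) (auto intro: mult_pos_pos)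
      moreover have "0 \<le> 1 / X" using X0 by simp
      ultimately show ?thesis using X by simp
    qed
    have qpos: "q t \<ge> 0" for t unfolding q_eq by simp
    have up: "integral {A..B} q \<le> G B - G A"
    proof (rule has_integral_le[OF qint FTC])
      fix t assume "t \<in> {A..B}"
      then show "q t \<le> q t * (1 + D t)" using Dbounds[of t] qpos[of t]
        by (simp add: mult_le_cancel_left1)
    qed
    have cle: "c * (1 + 1 / ln 2) \<le> 1"
    proof -
      have "sqrt 2 \<ge> 1" by simp
      then have "c \<le> (ln (2::real))^2 / 4" unfolding c_def by (intro divide_left_mono) auto
      moreover have "(ln (2::real))^2 / 4 * (1 + 1 / ln 2) = ((ln (2::real))^2 + ln 2) / 4" using ln2 by (simp add: field_simps power2_eq_square)
      moreover have "(ln (2::real))^2 \<le> 1" using ln2 by (simp add: power_le_one)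
      moreover have "c \<ge> 0" unfolding c_def by simp
      ultimately have "c * (1 + 1 / ln 2) \<le> (ln (2::real))^2 / 4 * (1 + 1 / ln 2)"
        using ln2 by (intro mult_right_mono) auto
      also have "\<dots> = ((ln (2::real))^2 + ln 2) / 4" by fact
      also have "\<dots> \<le> 1" using \<open>(ln (2::real))^2 \<le> 1\<close> ln2 by simp
      finally show ?thesis .
    qed
    have lo: "c * (G B - G A) \<le> integral {A..B} q"
    proof (rule has_integral_le[OF has_integral_cmult_real[OF FTC] qint])
      fix t assume t: "t \<in> {A..B}"
      have "c * (1 + D t) \<le> c * (1 + 1 / ln 2)" using Dbounds[OF t] unfolding c_def by (intro mult_left_mono) auto
      then have "c * (1 + D t) \<le> 1" using cle by linarith
      then have "q t * (c * (1 + D t)) \<le> q t * 1" using qpos[of t] by (intro mult_left_mono) auto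
      then show "c * (q t * (1 + D t)) \<le> q t" by (simp add: algebra_simps)
    qed
    have IA: "I = A + integral {A..B} q" using comb I1 I2 by simp
    have main: "A + c * (B / real n) * (f A - f B) \<le> I \<and> I \<le> A + (B / real n) * (f A - f B)"
    proof -
      have e: "c * (B / real n) * (f A - f B) = c * (G B - G A)" using GBA by (simp only: mult.assoc)
      show ?thesis unfolding e using IA up lo GBA by linarith
    qed
    have mn: "min A B = A" using True by (rule min_absorb1)
    have nB: "\<not> (A > B)" using True by linarith
    show ?thesis unfolding mn using main nB by blast
  qed
qed

end
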